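(* For each $x\in X$ we have $\deg(x)=\deg(T(x))$.
   Context: Paths and cycles: a graph is $G=(V,E)$ with $V$ finite and $E\subset V\times V$. A path is a finite sequence of vertices $(u_0,\dots,u_L)$ with $(u_j,u_{j+1})\in E$; its length is $|\cdot|=L$; a cycle is a path with $u_0=u_L$. For paths where one ends where the next starts, $+$ denotes concatenation and $a\,c$ means the cycle $c$ traversed $a$ times. Construction: $G_0=(V_0,E_0)$ with $V_0=\{v_{0,0}\}$, $E_0=\{e_{0,0}\}$, $e_{0,0}=(v_{0,0},v_{0,0})$. For $n\geq1$, $G_n=(V_n,E_n)$ consists of a vertex $v_{n,0}$, the loop $e_{n,0}=(v_{n,0},v_{n,0})$, and $n$ cycles $c_{n,1},\dots,c_{n,n}$, each starting and ending at $v_{n,0}$, whose vertices other than $v_{n,0}$ are pairwise distinct (within each cycle and across cycles); $V_n$ is the set of all these vertices and $E_n$ consists of $e_{n,0}$ and the edges of the cycles. The maps $\varphi_n\colon V_{n+1}\to V_n$ and the lengths of the cycles $c_{n+1,i}$ are defined together: $\varphi_n(v_{n+1,0})=v_{n,0}$, and for each $i$ a path $P_{n,i}$ in $G_n$ from $v_{n,0}$ to $v_{n,0}$ is given; $c_{n+1,i}$ has length $|P_{n,i}|$ and $\varphi_n$ maps its $j$-th vertex to the $j$-th vertex of $P_{n,i}$ (written $\varphi_n(c_{n+1,i})=P_{n,i}$). The paths are: $P_{0,1}=10\,e_{0,0}$; for $n\geq1$: $P_{n,i}=e_{n,0}+2c_{n,i}+2c_{n,i+1}+\dots+2c_{n,n}+e_{n,0}$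 for $2\leq i\leq n$; $P_{n,n+1}=(n+2)^2\big(\sum_{i=1}^n|c_{n,i}|\big)\,e_{n,0}$; and $P_{n,1}=(1\,e_{n,0}+2c_{n,1})+(2\,e_{n,0}+2c_{n,1})+\dots+(k_n\,e_{n,0}+2c_{n,1})+e_{n,0}+2c_{n,2}+\dots+2c_{n,n}+e_{n,0}$, where $k_n=2\big(1+\sum_{i=1}^n|c_{n,i}|\big)$. Let $X=\{x\in\prod_{n\geq0}V_n:\varphi_n(x_{n+1})=x_n\ \forall n\}$ with metric $d(x,y)=2^{-\min\{i:x_i\neq y_i\}}$ ($d(x,x)=0$); $X$ is a compact zero-dimensional metric space, and $T\colon X\to X$ defined by $T(x)=y$ iff $(x_n,y_n)\in E_n$ for all $n$ is a well-defined homeomorphism. Write $x_n$ for the $n$-th coordinate of $x$. Degree: for $v\in V_n$, $\deg(v)=+\infty$ if $v=v_{n,0}$ and $\deg(v)=i$ if $v$ is a vertex of $c_{n,i}$ different from $v_{n,0}$; for $x\in X$, $\deg(x)=\min_n\deg(x_n)$. *)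

theory Defs
  imports Main "HOL-Library.Extended_Nat"
begin

text \<open>Vertices of G_n: the base vertex v_{n,0} is Center; Cyc i j is the j-th vertex
  (1 <= j < |c_{n,i}|) of the cycle c_{n,i}.\<close>
datatype vtx = Center | Cyc nat nat

text \<open>Paths are represented as lists of vertices (u_0,...,u_L); length of path = length - 1.\<close>
definition pcat :: "vtx list \<Rightarrow> vtx list \<Rightarrow> vtx list" where
  "pcat p q = p @ tl q"

primrec prep :: "nat \<Rightarrow> vtx list \<Rightarrow> vtx list" where
  "prep 0 p = [Center]"
| "prep (Suc a) p = pcat p (prep a p)"

definition pcats :: "vtx list list \<Rightarrow> vtx list" where
  "pcats ps = foldr pcat ps [Center]"

definition loop :: "vtx list" where
  "loop = [Center, Center]"

text \<open>The cycle c_{n,i}, given the length function len i = |c_{n,i}|.\<close>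
definition cyc :: "(nat \<Rightarrow> nat) \<Rightarrow> nat \<Rightarrow> vtx list" where
  "cyc len i = [Center] @ map (Cyc i) [1..<len i] @ [Center]"

definition Pgen :: "nat \<Rightarrow> (nat \<Rightarrow> nat) \<Rightarrow> nat \<Rightarrow> vtx list" where
  "Pgen n len i =
    (let S = (\<Sum>j=1..n. len j); k = 2 * (1 + S) in
     if i = n + 1 then prep ((n + 2)^2 * S) loop
     else if 2 \<le> i \<and> i \<le> n then
       pcats ([loop] @ map (\<lambda>j. prep 2 (cyc len j)) [i..<n+1] @ [loop])
     else if i = 1 then
       pcats (map (\<lambda>a. pcat (prep a loop) (prep 2 (cyc len 1))) [1..<k+1]
              @ [loop] @ map (\<lambda>j. prep 2 (cyc len j)) [2..<n+1] @ [loop])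
     else [Center])"

definition Ppath :: "nat \<Rightarrow> (nat \<Rightarrow> nat) \<Rightarrow> nat \<Rightarrow> vtx list" where
  "Ppath n len i = (if n = 0 then prep 10 loop else Pgen n len i)"

primrec cl :: "nat \<Rightarrow> nat \<Rightarrow> nat" where
  "cl 0 = (\<lambda>i. 0)"
| "cl (Suc n) = (\<lambda>i. if 1 \<le> i \<and> i \<le> Suc n then length (Ppath n (cl n) i) - 1 else 0)"

definition P :: "nat \<Rightarrow> nat \<Rightarrow> vtx list" where
  "P n i = Ppath n (cl n) i"

definition V :: "nat \<Rightarrow> vtx set" where
  "V n = {Center} \<union> {Cyc i j | i j. 1 \<le> i \<and> i \<le> n \<and> 1 \<le> j \<and> j < cl n i}"

definition E :: "nat \<Rightarrow> (vtx \<times> vtx) set" where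
  "E n = {(Center, Center)} \<union>
     {(cyc (cl n) i ! j, cyc (cl n) i ! (j + 1)) | i j. 1 \<le> i \<and> i \<le> n \<and> j < cl n i}"

definition phi :: "nat \<Rightarrow> vtx \<Rightarrow> vtx" where
  "phi n v = (case v of Center \<Rightarrow> Center | Cyc i j \<Rightarrow> P n i ! j)"

definition X :: "(nat \<Rightarrow> vtx) set" where
  "X = {x. (\<forall>n. x n \<in> V n) \<and> (\<forall>n. phi n (x (Suc n)) = x n)}"

definition T :: "(nat \<Rightarrow> vtx) \<Rightarrow> (nat \<Rightarrow> vtx)" where
  "T x = (THE y. y \<in> X \<and> (\<forall>n. (x n, y n) \<in> E n))"

definition degv :: "vtx \<Rightarrow> enat" where
  "degv v = (case v of Center \<Rightarrow> \<infinity> | Cyc i j \<Rightarrow> enat i)"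

definition deg :: "(nat \<Rightarrow> vtx) \<Rightarrow> enat" where
  "deg x = (INF n. degv (x n))"

end

theory Submission
  imports Defs
begin

lemma succ_nth: "successively R xs \<longleftrightarrow> (\<forall>t. Suc t < length xs \<longrightarrow> R (xs!t) (xs!Suc t))"
proof (induction R xs rule: successively.induct)
  case (3 R x y xs)
  show ?case
    apply (simp add: 3)
    apply (rule iffI)
     apply clarsimp
     apply (case_tac t) apply auto
    done
qed auto

definition good :: "nat \<Rightarrow> vtx list \<Rightarrow> bool" where
  "good n p \<longleftrightarrow> p \<noteq> [] \<and> hd p = Center \<and> last p = Center \<and> successively (\<lambda>u v. (u,v) \<in> E n) p"

lemma good_pcat: "good n p \<Longrightarrow> good n q \<Longrightarrow> good n (pcat p q)"
  unfolding good_def pcat_def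
proof (elim conjE, intro conjI)
  assume q: "q \<noteq> []" "hd q = Center" "last q = Center" "successively (\<lambda>u v. (u,v) \<in> E n) q"
     and p: "p \<noteq> []" "hd p = Center" "last p = Center" "successively (\<lambda>u v. (u,v) \<in> E n) p"
  have qq: "q = Center # tl q" using q by (cases q) auto
  show "p @ tl q \<noteq> []" using p by simp
  show "hd (p @ tl q) = Center" using p by simp
  show "last (p @ tl q) = Center" using p q qq
    by (metis append.right_neutral last_ConsR last_appendR)
  show "successively (\<lambda>u v. (u,v) \<in> E n) (p @ tl q)"
  proof (cases "tl q = []")
    case True then show ?thesis using p by simp
  next
    case False
    have s: "successively (\<lambda>u v. (u,v) \<in> E n) (Center # tl q)" using q qq by simp
    then show ?thesis using p False
      by (auto simp: successively_append_iff successively_Cons)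
  qed
qed

lemma good_single: "good n [Center]" by (simp add: good_def)

lemma good_prep: "good n p \<Longrightarrow> good n (prep a p)"
  by (induction a) (auto simp: good_single good_pcat)

lemma pcats_Cons: "pcats (q # qs) = pcat q (pcats qs)" by (simp add: pcats_def)
lemma pcats_Nil: "pcats [] = [Center]" by (simp add: pcats_def)

lemma good_pcats: "\<forall>q\<in>set qs. good n q \<Longrightarrow> good n (pcats qs)"
  by (induction qs) (auto simp: pcats_Cons pcats_Nil good_single good_pcat)

lemma loop_E: "(Center, Center) \<in> E n" by (simp add: E_def)

lemma good_loop: "good n loop" by (simp add: good_def loop_def loop_E)

lemma length_cyc: "length (cyc L i) = (if L i = 0 then 2 else Suc (L i))"
  by (simp add: cyc_def)

lemma good_cyc: "1 \<le> j \<Longrightarrow> j \<le> n \<Longrightarrow> good n (cyc (cl n) j)"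
  unfolding good_def
proof (intro conjI)
  assume j: "1 \<le> j" "j \<le> n"
  show "cyc (cl n) j \<noteq> []" "hd (cyc (cl n) j) = Center" "last (cyc (cl n) j) = Center"
    by (auto simp: cyc_def)
  show "successively (\<lambda>u v. (u, v) \<in> E n) (cyc (cl n) j)"
  proof (cases "cl n j = 0")
    case True then show ?thesis by (simp add: cyc_def loop_E)
  next
    case False
    show ?thesis unfolding succ_nth
    proof (intro allI impI)
      fix t assume "Suc t < length (cyc (cl n) j)"
      then have "t < cl n j" using False by (simp add: length_cyc)
      then show "(cyc (cl n) j ! t, cyc (cl n) j ! Suc t) \<in> E n"
        unfolding E_def using j by auto
    qed
  qed
qed


definition SS :: "nat \<Rightarrow> vtx set" where
  "SS k = insert Center {Cyc a b | a b. k \<le> a}"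

lemma C_SS: "Center \<in> SS k" by (simp add: SS_def)

lemma set_tl_sub: "set (tl q) \<subseteq> set q"
  by (cases q) auto

lemma SS_pcat: "set p \<subseteq> A \<Longrightarrow> set q \<subseteq> A \<Longrightarrow> set (pcat p q) \<subseteq> A"
  unfolding pcat_def using set_tl_sub[of q] by auto

lemma SS_prep: "Center \<in> A \<Longrightarrow> set p \<subseteq> A \<Longrightarrow> set (prep a p) \<subseteq> A"
  by (induction a) (simp_all add: SS_pcat)

lemma SS_pcats: "Center \<in> A \<Longrightarrow> \<forall>q\<in>set qs. set q \<subseteq> A \<Longrightarrow> set (pcats qs) \<subseteq> A"
  by (induction qs) (simp_all add: pcats_Cons pcats_Nil SS_pcat)

lemma SS_loop: "Center \<in> A \<Longrightarrow> set loop \<subseteq> A" by (simp add: loop_def)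

lemma SS_cyc: "k \<le> j \<Longrightarrow> set (cyc L j) \<subseteq> SS k"
  by (auto simp: cyc_def SS_def)

definition sl :: "vtx list \<Rightarrow> bool" where
  "sl p \<longleftrightarrow> 2 \<le> length p \<and> p ! 1 = Center"
definition el :: "vtx list \<Rightarrow> bool" where
  "el p \<longleftrightarrow> 2 \<le> length p \<and> p ! (length p - 2) = Center"

lemma sl_loop: "sl loop" by (simp add: sl_def loop_def)
lemma el_loop: "el loop" by (simp add: el_def loop_def)

lemma sl_pcat: "sl p \<Longrightarrow> sl (pcat p q)"
  by (auto simp: sl_def pcat_def nth_append)

lemma el_pcat: assumes "good n p" "good n q" "el q" shows "el (pcat p q)"
proof -
  have p: "p \<noteq> []" "last p = Center" using assms(1) by (auto simp: good_def)
  have q: "2 \<le> length q" "q ! (length q - 2) = Center" using assms(3) by (auto simp: el_def)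
  show ?thesis
  proof (cases "length q = 2")
    case True
    then have "length (pcat p q) = Suc (length p)" by (simp add: pcat_def)
    moreover have "pcat p q ! (length p - 1) = Center"
      using p by (simp add: pcat_def nth_append last_conv_nth)
    ultimately show ?thesis using p by (simp add: el_def Suc_le_eq)
  next
    case False
    then have l3: "3 \<le> length q" using q by simp
    have len: "length (pcat p q) = length p + length q - 1" using q by (simp add: pcat_def)
    have eq: "length p + length q - 1 - 2 = length p + (length q - 3)" using l3 by simp
    have "pcat p q ! (length p + length q - 1 - 2) = tl q ! (length q - 3)"
      by (simp only: eq pcat_def nth_append_length_plus)
    also have "\<dots> = q ! (length q - 2)" using l3 by (simp add: nth_tl numeral_3_eq_3 numeral_2_eq_2 Suc_diff_Suc)
    finally show ?thesis using q len l3 by (simp add: el_def)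
  qed
qed

lemma el_pcats: "qs \<noteq> [] \<Longrightarrow> last qs = loop \<Longrightarrow> \<forall>q\<in>set qs. good n q \<Longrightarrow> el (pcats qs)"
proof (induction qs)
  case (Cons q qs)
  show ?case
  proof (cases "qs = []")
    case True then show ?thesis using Cons by (simp add: pcats_Cons pcats_Nil pcat_def loop_def el_def)
  next
    case False
    then show ?thesis using Cons unfolding pcats_Cons
      by (intro el_pcat good_pcats) auto
  qed
qed simp

lemma prep_loop_set: "set (prep a loop) \<subseteq> {Center}"
  by (rule SS_prep) (auto simp: loop_def)

lemma good_props:
  assumes "good n p"
  shows "\<forall>t. Suc t < length p \<longrightarrow> (p!t, p!Suc t) \<in> E n"
    and "p ! 0 = Center" and "p ! (length p - 1) = Center"
  using assms by (auto simp: good_def succ_nth hd_conv_nth last_conv_nth)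

lemma D_of: assumes "good n p" "sl p" "el p"
  shows "\<forall>j<length p. p!j \<noteq> Center \<longrightarrow> 2 \<le> j \<and> j + 2 < length p"
proof (intro allI impI)
  fix j assume j: "j < length p" "p ! j \<noteq> Center"
  have "p ! 0 = Center" "p ! (length p - 1) = Center" using good_props[OF assms(1)] by auto
  moreover have "p ! 1 = Center" "p ! (length p - 2) = Center" "2 \<le> length p"
    using assms(2,3) by (auto simp: sl_def el_def)
  ultimately have "j \<noteq> 0 \<and> j \<noteq> 1 \<and> j \<noteq> length p - 1 \<and> j \<noteq> length p - 2" using j(2) by metis
  then show "2 \<le> j \<and> j + 2 < length p" using j by linarith
qed

lemma D_of_C: assumes "set p \<subseteq> {Center}"
  shows "\<forall>j<length p. p!j \<noteq> Center \<longrightarrow> 2 \<le> j \<and> j + 2 < length p"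
  using assms nth_mem by fastforce


lemma SS_prep_cyc: "k \<le> j \<Longrightarrow> set (prep a (cyc L j)) \<subseteq> SS k"
  by (intro SS_prep C_SS SS_cyc)

lemma prep_loop_props:
  "good n (prep a loop) \<and> set (prep a loop) \<subseteq> SS k \<and>
   (\<forall>j<length (prep a loop). prep a loop!j \<noteq> Center \<longrightarrow> 2 \<le> j \<and> j+2 < length (prep a loop))"
  using good_prep[OF good_loop] prep_loop_set[of a] D_of_C[OF prep_loop_set[of a]] C_SS[of k]
  by blast

lemma P_props: assumes "1 \<le> k" "k \<le> Suc n"
  shows "good n (P n k) \<and> set (P n k) \<subseteq> SS k \<and>
    (\<forall>j<length (P n k). P n k!j \<noteq> Center \<longrightarrow> 2 \<le> j \<and> j+2 < length (P n k))"
proof (cases "n = 0")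
  case True
  then show ?thesis using prep_loop_props by (simp add: P_def Ppath_def)
next
  case False
  note n = False
  define S where "S = (\<Sum>j=1..n. cl n j)"
  define K where "K = 2 * (1 + S)"
  define cs where "cs = (\<lambda>i. map (\<lambda>j. prep 2 (cyc (cl n) j)) [i..<n+1])"
  have cs_good: "\<forall>q\<in>set (cs i). good n q" if "1 \<le> i" for i
    using that by (auto simp: cs_def intro!: good_prep good_cyc)
  have cs_SS: "\<forall>q\<in>set (cs i). set q \<subseteq> SS i" for i
    using SS_prep_cyc by (fastforce simp: cs_def)
  consider "k = Suc n" | "2 \<le> k \<and> k \<le> n" | "k = 1" using assms by linarith
  then show ?thesis
  proof cases
    case 1
    then show ?thesis using n prep_loop_props by (simp add: P_def Ppath_def Pgen_def Let_def)
  next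
    case 2
    have PP: "P n k = pcats ([loop] @ cs k @ [loop])"
      using n 2 by (simp add: P_def Ppath_def Pgen_def Let_def cs_def)
    have all: "\<forall>q\<in>set ([loop] @ cs k @ [loop]). good n q"
      using cs_good[of k] 2 good_loop by auto
    have g: "good n (P n k)" unfolding PP by (rule good_pcats[OF all])
    have s: "set (P n k) \<subseteq> SS k" unfolding PP
      using cs_SS[of k] SS_loop[OF C_SS] by (intro SS_pcats C_SS) auto
    have "sl (P n k)" unfolding PP by (simp add: pcats_Cons sl_pcat sl_loop)
    moreover have "el (P n k)" unfolding PP by (rule el_pcats[OF _ _ all]) auto
    ultimately show ?thesis using g s D_of by blast
  next
    case 3
    define A where "A = map (\<lambda>a. pcat (prep a loop) (prep 2 (cyc (cl n) 1))) [1..<K+1]"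
    have PP: "P n k = pcats (A @ [loop] @ cs 2 @ [loop])"
      using n 3 by (simp add: P_def Ppath_def Pgen_def Let_def cs_def A_def K_def S_def)
    have c1: "good n (cyc (cl n) 1)" using n by (intro good_cyc) auto
    have all: "\<forall>q\<in>set (A @ [loop] @ cs 2 @ [loop]). good n q"
      using cs_good[of 2] good_loop c1 by (auto simp: A_def intro!: good_pcat good_prep)
    have g: "good n (P n k)" unfolding PP by (rule good_pcats[OF all])
    have A_SS: "\<forall>q\<in>set A. set q \<subseteq> SS 1" unfolding A_def
      using SS_pcat[OF SS_prep[OF C_SS SS_loop[OF C_SS]] SS_prep_cyc[of 1 1]] by auto
    have m: "SS 2 \<subseteq> SS 1" by (auto simp: SS_def)
    have cs2: "\<forall>q\<in>set (cs 2). set q \<subseteq> SS 1" using cs_SS[of 2] m by blast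
    have s: "set (P n k) \<subseteq> SS k" unfolding PP using A_SS cs2 SS_loop[OF C_SS] 3
      by (intro SS_pcats C_SS) auto
    have A1: "A = pcat loop (prep 2 (cyc (cl n) 1)) # tl A"
      unfolding A_def K_def by (simp add: upt_rec pcat_def loop_def)
    have "sl (P n k)" unfolding PP by (subst A1) (simp add: pcats_Cons sl_pcat sl_loop)
    moreover have "el (P n k)" unfolding PP by (rule el_pcats[OF _ _ all]) auto
    ultimately show ?thesis using g s D_of by blast
  qed
qed


lemma cyc_nth: assumes "t \<le> L i"
  shows "cyc L i ! t = (if t = 0 \<or> t = L i then Center else Cyc i t)"
proof (cases "t = 0")
  case True then show ?thesis by (simp add: cyc_def)
next
  case False
  then obtain s where s: "t = Suc s" by (cases t) auto
  have "cyc L i ! t = (map (Cyc i) [1..<L i] @ [Center]) ! s" by (simp add: cyc_def s)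
  also have "\<dots> = (if t = L i then Center else Cyc i t)"
    using assms s by (auto simp: nth_append)
  finally show ?thesis using False by simp
qed

definition cv :: "nat \<Rightarrow> nat \<Rightarrow> nat \<Rightarrow> vtx" where
  "cv n i t = (if t = 0 \<or> t = cl n i then Center else Cyc i t)"

lemma E_iff: "(u,v) \<in> E n \<longleftrightarrow> (u = Center \<and> v = Center) \<or>
   (\<exists>i t. 1 \<le> i \<and> i \<le> n \<and> t < cl n i \<and> u = cv n i t \<and> v = cv n i (Suc t))"
proof -
  have eq: "cyc (cl n) i ! j = cv n i j" "cyc (cl n) i ! Suc j = cv n i (Suc j)" if "j < cl n i" for i j
    using that by (simp_all add: cyc_nth cv_def)
  show ?thesis
  proof
    assume "(u,v) \<in> E n"
    then show "(u = Center \<and> v = Center) \<or>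
   (\<exists>i t. 1 \<le> i \<and> i \<le> n \<and> t < cl n i \<and> u = cv n i t \<and> v = cv n i (Suc t))"
      unfolding E_def using eq by fastforce
  next
    assume "(u = Center \<and> v = Center) \<or>
   (\<exists>i t. 1 \<le> i \<and> i \<le> n \<and> t < cl n i \<and> u = cv n i t \<and> v = cv n i (Suc t))"
    then show "(u,v) \<in> E n"
    proof
      assume "u = Center \<and> v = Center" then show ?thesis by (simp add: E_def)
    next
      assume "\<exists>i t. 1 \<le> i \<and> i \<le> n \<and> t < cl n i \<and> u = cv n i t \<and> v = cv n i (Suc t)"
      then obtain i t where a: "1 \<le> i" "i \<le> n" "t < cl n i" "u = cv n i t" "v = cv n i (Suc t)" by blast
      then have "(u,v) = (cyc (cl n) i ! t, cyc (cl n) i ! (t + 1))" using eq by simp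
      then show ?thesis unfolding E_def using a by blast
    qed
  qed
qed

definition sc :: "nat \<Rightarrow> vtx \<Rightarrow> vtx" where
  "sc n v = (case v of Center \<Rightarrow> Center | Cyc k j \<Rightarrow> if Suc j = cl n k then Center else Cyc k (Suc j))"

lemma E_from_Cyc: "(Cyc k j, v) \<in> E n \<Longrightarrow> v = sc n (Cyc k j)"
  unfolding E_iff by (auto simp: cv_def sc_def split: if_splits)

lemma E_to_Cyc: "(u, Cyc k j) \<in> E n \<Longrightarrow> u = (if j = 1 then Center else Cyc k (j - 1))"
  unfolding E_iff by (auto simp: cv_def split: if_splits)

lemma E_V: "(u,v) \<in> E n \<Longrightarrow> v \<in> V n"
proof (unfold E_iff, elim disjE exE conjE)
  assume "v = Center" then show ?thesis by (simp add: V_def)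
next
  fix i t assume a: "1 \<le> i" "i \<le> n" "t < cl n i" "v = cv n i (Suc t)"
  show ?thesis
  proof (cases "Suc t = cl n i")
    case True then show ?thesis using a by (simp add: V_def cv_def)
  next
    case False then show ?thesis using a unfolding V_def cv_def by auto
  qed
qed

lemma sc_E: "u \<in> V n \<Longrightarrow> (u, sc n u) \<in> E n"
  unfolding V_def
proof (elim UnE)
  assume "u \<in> {Center}" then show ?thesis by (simp add: sc_def loop_E)
next
  assume "u \<in> {Cyc i j |i j. 1 \<le> i \<and> i \<le> n \<and> 1 \<le> j \<and> j < cl n i}"
  then obtain i j where u: "u = Cyc i j" "1 \<le> i" "i \<le> n" "1 \<le> j" "j < cl n i" by blast
  show ?thesis unfolding E_iff
    by (rule disjI2, rule exI[of _ i], rule exI[of _ j]) (use u in \<open>auto simp: cv_def sc_def\<close>)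
qed

lemma cl_Suc: "1 \<le> i \<Longrightarrow> i \<le> Suc n \<Longrightarrow> cl (Suc n) i = length (P n i) - 1"
  by (simp add: P_def)

lemma phi_cv: assumes "1 \<le> i" "i \<le> Suc n" "t \<le> cl (Suc n) i"
  shows "phi n (cv (Suc n) i t) = P n i ! t"
proof -
  have g: "good n (P n i)" using P_props[OF assms(1,2)] by blast
  note gp = good_props[OF g]
  show ?thesis
    using assms gp(2,3) cl_Suc[OF assms(1,2)] by (auto simp: cv_def phi_def)
qed

lemma phi_hom: "(u,v) \<in> E (Suc n) \<Longrightarrow> (phi n u, phi n v) \<in> E n"
proof (unfold E_iff[of u v], elim disjE exE conjE)
  assume "u = Center" "v = Center" then show ?thesis by (simp add: phi_def loop_E)
next
  fix i t assume a: "1 \<le> i" "i \<le> Suc n" "t < cl (Suc n) i" "u = cv (Suc n) i t" "v = cv (Suc n) i (Suc t)"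
  have g: "good n (P n i)" using P_props[OF a(1,2)] by blast
  have "Suc t < length (P n i)" using a(3) cl_Suc[OF a(1,2)] by simp
  then show ?thesis using a phi_cv good_props(1)[OF g] by simp
qed

lemma K: "(u,v) \<in> E (Suc n) \<Longrightarrow> phi n v = phi n (sc (Suc n) u)"
proof (cases u)
  case Center
  assume e: "(u,v) \<in> E (Suc n)"
  show ?thesis
  proof (cases v)
    case (Cyc k j)
    then have "u = (if j = 1 then Center else Cyc k (j - 1))" using E_to_Cyc e by blast
    then have j: "j = 1" using Center by (auto split: if_splits)
    from e[unfolded E_iff] Cyc obtain i t where a: "1 \<le> i" "i \<le> Suc n" "t < cl (Suc n) i"
       "v = cv (Suc n) i (Suc t)" "u = cv (Suc n) i t" by auto
    have t: "t = 0" "i = k" using a(4,5) Cyc j Center by (auto simp: cv_def split: if_splits)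
    have P1: "P n i ! 1 = Center"
    proof (rule ccontr)
      assume "P n i ! 1 \<noteq> Center"
      moreover have "1 < length (P n i)" using a(3) t cl_Suc[OF a(1,2)] by simp
      ultimately show False using P_props[OF a(1,2)] by auto
    qed
    have "phi n v = P n i ! 1" using a(4) Cyc t phi_cv[OF a(1,2)] a(3) by (metis One_nat_def Suc_leI)
    then show ?thesis using P1 Center by (simp add: sc_def phi_def)
  qed (simp add: Center sc_def phi_def)
next
  case (Cyc k j)
  assume e: "(u,v) \<in> E (Suc n)"
  then show ?thesis using E_from_Cyc Cyc by simp
qed


lemma T_props: assumes x: "x \<in> X"
  shows "T x \<in> X \<and> (\<forall>n. (x n, T x n) \<in> E n)"
proof -
  define y where "y n = phi n (sc (Suc n) (x (Suc n)))" for n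
  have xV: "x n \<in> V n" and xphi: "phi n (x (Suc n)) = x n" for n using x by (auto simp: X_def)
  have e: "(x n, y n) \<in> E n" for n
    using phi_hom[OF sc_E[OF xV[of "Suc n"]]] xphi[of n] by (simp add: y_def)
  have yX: "y \<in> X" unfolding X_def
  proof (intro CollectI conjI allI)
    fix n show "y n \<in> V n" using E_V[OF e] .
    show "phi n (y (Suc n)) = y n" using K[OF e[of "Suc n"]] by (simp add: y_def)
  qed
  have uniq: "z = y" if "z \<in> X \<and> (\<forall>n. (x n, z n) \<in> E n)" for z
  proof
    fix n
    have "z n = phi n (z (Suc n))" using that by (simp add: X_def)
    also have "\<dots> = y n" using K[of "x (Suc n)" "z (Suc n)" n] that by (simp add: y_def)
    finally show "z n = y n" .
  qed
  have "\<exists>!z. z \<in> X \<and> (\<forall>n. (x n, z n) \<in> E n)"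
    using yX e uniq by blast
  from theI'[OF this] show ?thesis unfolding T_def .
qed

lemma Vcyc: "Cyc k j \<in> V n \<Longrightarrow> 1 \<le> k \<and> k \<le> n \<and> 1 \<le> j \<and> j < cl n k"
  by (auto simp: V_def)

theorem lemma3p8:
  assumes "x \<in> X"
  shows "deg x = deg (T x)"
proof -
  define y where "y = T x"
  have yX: "y \<in> X" and e: "\<And>n. (x n, y n) \<in> E n" using T_props[OF assms] by (auto simp: y_def)
  have xV: "x n \<in> V n" and xphi: "phi n (x (Suc n)) = x n" for n using assms by (auto simp: X_def)
  have yV: "y n \<in> V n" and yphi: "phi n (y (Suc n)) = y n" for n using yX by (auto simp: X_def)
  have pre: "\<exists>k' j'. z (Suc n) = Cyc k' j' \<and> k' \<le> k \<and> 2 \<le> j' \<and> j' + 1 < cl (Suc n) k'"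
    if zV: "\<And>m. z m \<in> V m" and zphi: "\<And>m. phi m (z (Suc m)) = z m" and zn: "z n = Cyc k j" for z n k j
  proof (cases "z (Suc n)")
    case Center then show ?thesis using zphi[of n] zn by (simp add: phi_def)
  next
    case (Cyc k' j')
    have v: "1 \<le> k' \<and> k' \<le> Suc n \<and> 1 \<le> j' \<and> j' < cl (Suc n) k'" using Vcyc[of k' j' "Suc n"] zV[of "Suc n"] Cyc by metis
    have Pj: "P n k' ! j' = Cyc k j" using zphi[of n] zn Cyc by (simp add: phi_def)
    have len: "j' < length (P n k')" using v cl_Suc[of k' n] by linarith
    note PP = P_props[of k' n]
    have "Cyc k j \<in> SS k'" using PP v Pj len nth_mem by (metis subsetD)
    then have "k' \<le> k" by (auto simp: SS_def)
    moreover have "2 \<le> j' \<and> j' + 2 < length (P n k')" using PP v Pj len by auto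
    ultimately show ?thesis using Cyc v cl_Suc[of k' n] by auto
  qed
  have le1: "deg y \<le> degv (x n)" for n
  proof (cases "x n")
    case Center then show ?thesis by (simp add: degv_def)
  next
    case (Cyc k j)
    obtain k' j' where a: "x (Suc n) = Cyc k' j'" "k' \<le> k" "2 \<le> j'" "j' + 1 < cl (Suc n) k'"
      using pre[of x, OF xV xphi Cyc] by blast
    have "y (Suc n) = sc (Suc n) (Cyc k' j')" using E_from_Cyc[of k' j' "y (Suc n)"] e[of "Suc n"] a(1)
      by simp
    then have "y (Suc n) = Cyc k' (Suc j')" using a(4) by (simp add: sc_def del: cl.simps)
    then have "deg y \<le> enat k'" unfolding deg_def by (metis INF_lower UNIV_I degv_def vtx.simps(5))
    then show ?thesis using a Cyc by (simp add: degv_def order_trans)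
  qed
  have le2: "deg x \<le> degv (y n)" for n
  proof (cases "y n")
    case Center then show ?thesis by (simp add: degv_def)
  next
    case (Cyc k j)
    obtain k' j' where a: "y (Suc n) = Cyc k' j'" "k' \<le> k" "2 \<le> j'" "j' + 1 < cl (Suc n) k'"
      using pre[of y, OF yV yphi Cyc] by blast
    have "x (Suc n) = Cyc k' (j' - 1)" using E_to_Cyc[of "x (Suc n)" k' j'] e[of "Suc n"] a
      by simp
    then have "deg x \<le> enat k'" unfolding deg_def by (metis INF_lower UNIV_I degv_def vtx.simps(5))
    then show ?thesis using a Cyc by (simp add: degv_def order_trans)
  qed
  have "deg y \<le> deg x" unfolding deg_def[of x] by (rule INF_greatest) (rule le1)
  moreover have "deg x \<le> deg y" unfolding deg_def[of y] by (rule INF_greatest) (rule le2)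
  ultimately show ?thesis by (simp add: y_def)
qed

end
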